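(* Let $a,b\in\mathbb{C}$ be such that the six numbers $(t_1,\dots,t_6)=(1,-1,a,-a,b,-b)$ are pairwise distinct, and let ${\mathcal A}^0=\{H_1^0,\dots,H_6^0\}$ be the central arrangement in $\mathbb{C}^3$ with $H_i^0=\{x\in\mathbb{C}^3:\alpha_i\cdot x=0\}$, $\alpha_i=(1,t_i,t_i^2)$. Then ${\mathcal A}^0$ is a central generic arrangement which is non-very generic.
   Context: A central arrangement ${\mathcal A}^0=\{H_1^0,\dots,H_n^0\}$ of linear hyperplanes in $\mathbb{C}^k$ ($k<n$) is called central generic if any $m\le k$ of its hyperplanes intersect in codimension $m$. For $t=(x_1,\dots,x_n)\in\mathbb{C}^n$ the translate ${\mathcal A}^t$ consists of $H_i^{x_i}=H_i^0+\alpha_i x_i$, $\alpha_i$ normal to $H_i^0$. For $L\subset[n]$, $|L|=k+1$, $D_L\subset\mathbb{C}^n$ is the hyperplane of translations $t$ with $\bigcap_{p\in L}H_p^{x_p}\ne\emptyset$; the discriminantal arrangement ${\mathcal B}(n,k,{\mathcal A}^0)$ is the arrangement of all $D_L$. There is a Zariski open dense set $\mathcal Z$ of central generic arrangements of $n$ hyperplanes in $\mathbb{C}^k$ on which the intersection lattice of ${\mathcal B}(n,k,{\mathcal A})$ is constant; arrangements in $\mathcal Z$ are very generic, the others non-very generic. *)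

theory Defs
  imports Complex_Main
begin

text \<open>An arrangement of n hyperplanes in C^k is given by its normal (coefficient) vectors
  alpha i = (alpha i 0, ..., alpha i (k-1)) for i < n; H_i^0 = {v. sum_j alpha i j * v j = 0}.\<close>

definition arr_space :: "nat \<Rightarrow> nat \<Rightarrow> (nat \<Rightarrow> nat \<Rightarrow> complex) set" where
  "arr_space n k = {\<alpha>. \<forall>p j. (n \<le> p \<or> k \<le> j) \<longrightarrow> \<alpha> p j = 0}"

definition lin_form :: "nat \<Rightarrow> (nat \<Rightarrow> complex) \<Rightarrow> (nat \<Rightarrow> complex) \<Rightarrow> complex" where
  "lin_form k a v = (\<Sum>j<k. a j * v j)"

text \<open>Central generic: any m \<le> k of the hyperplanes meet in codimension m, i.e. any
  m \<le> k of the normal vectors are linearly independent.\<close>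
definition central_generic :: "nat \<Rightarrow> nat \<Rightarrow> (nat \<Rightarrow> nat \<Rightarrow> complex) \<Rightarrow> bool" where
  "central_generic n k \<alpha> \<longleftrightarrow> k < n \<and> \<alpha> \<in> arr_space n k \<and>
     (\<forall>I. I \<subseteq> {..<n} \<and> card I \<le> k \<longrightarrow>
        (\<forall>c. (\<forall>j<k. (\<Sum>i\<in>I. c i * \<alpha> i j) = 0) \<longrightarrow> (\<forall>i\<in>I. c i = 0)))"

text \<open>Translated hyperplane H_p^{x}: all points w with alpha_p . w = x.  (Translating H_p^0 by
  x times a fixed vector transversal to H_p^0; any such choice only rescales the coordinate x_p
  of the translation space, which does not change the intersection lattice.)\<close>
definition transl_hyp :: "nat \<Rightarrow> (nat \<Rightarrow> nat \<Rightarrow> complex) \<Rightarrow> nat \<Rightarrow> complex \<Rightarrow> (nat \<Rightarrow> complex) set" where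
  "transl_hyp k \<alpha> p x = {w. lin_form k (\<alpha> p) w = x}"

definition Ls :: "nat \<Rightarrow> nat \<Rightarrow> nat set set" where
  "Ls n k = {L. L \<subseteq> {..<n} \<and> card L = k + 1}"

definition D_L :: "nat \<Rightarrow> (nat \<Rightarrow> nat \<Rightarrow> complex) \<Rightarrow> nat set \<Rightarrow> (nat \<Rightarrow> complex) set" where
  "D_L k \<alpha> L = {t. (\<Inter>p\<in>L. transl_hyp k \<alpha> p (t p)) \<noteq> {}}"

text \<open>The (labelled) intersection lattice of B(n,k,A): recorded by which hyperplanes D_L contain
  each intersection of a family of the D_M (this determines the lattice of flats with labels).\<close>
definition lattice_data :: "nat \<Rightarrow> nat \<Rightarrow> (nat \<Rightarrow> nat \<Rightarrow> complex) \<Rightarrow> nat set set \<Rightarrow> nat set \<Rightarrow> bool" where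
  "lattice_data n k \<alpha> = (\<lambda>S L. S \<subseteq> Ls n k \<and> L \<in> Ls n k \<and> (\<Inter>M\<in>S. D_L k \<alpha> M) \<subseteq> D_L k \<alpha> L)"

inductive polyfun :: "nat \<Rightarrow> nat \<Rightarrow> ((nat \<Rightarrow> nat \<Rightarrow> complex) \<Rightarrow> complex) \<Rightarrow> bool"
  for n k where
  const: "polyfun n k (\<lambda>_. c)"
| coord: "p < n \<Longrightarrow> j < k \<Longrightarrow> polyfun n k (\<lambda>\<alpha>. \<alpha> p j)"
| add: "polyfun n k f \<Longrightarrow> polyfun n k g \<Longrightarrow> polyfun n k (\<lambda>\<alpha>. f \<alpha> + g \<alpha>)"
| mult: "polyfun n k f \<Longrightarrow> polyfun n k g \<Longrightarrow> polyfun n k (\<lambda>\<alpha>. f \<alpha> * g \<alpha>)"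

definition zariski_closed :: "nat \<Rightarrow> nat \<Rightarrow> (nat \<Rightarrow> nat \<Rightarrow> complex) set \<Rightarrow> bool" where
  "zariski_closed n k C \<longleftrightarrow> (\<exists>F. (\<forall>f\<in>F. polyfun n k f) \<and>
      C = {\<alpha> \<in> arr_space n k. \<forall>f\<in>F. f \<alpha> = 0})"

definition zariski_open :: "nat \<Rightarrow> nat \<Rightarrow> (nat \<Rightarrow> nat \<Rightarrow> complex) set \<Rightarrow> bool" where
  "zariski_open n k U \<longleftrightarrow> U \<subseteq> arr_space n k \<and> zariski_closed n k (arr_space n k - U)"

definition zariski_dense :: "nat \<Rightarrow> nat \<Rightarrow> (nat \<Rightarrow> nat \<Rightarrow> complex) set \<Rightarrow> bool" where
  "zariski_dense n k Z \<longleftrightarrow> (\<forall>C. zariski_closed n k C \<and> Z \<subseteq> C \<longrightarrow> C = arr_space n k)"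

definition very_generic :: "nat \<Rightarrow> nat \<Rightarrow> (nat \<Rightarrow> nat \<Rightarrow> complex) \<Rightarrow> bool" where
  "very_generic n k \<alpha> \<longleftrightarrow> central_generic n k \<alpha> \<and>
     (\<exists>Z. zariski_open n k Z \<and> zariski_dense n k Z \<and> Z \<subseteq> {\<beta>. central_generic n k \<beta>} \<and>
          \<alpha> \<in> Z \<and> (\<forall>\<beta>\<in>Z. lattice_data n k \<beta> = lattice_data n k \<alpha>))"

end

theory Submission imports Defs begin

definition VA :: "complex \<Rightarrow> complex \<Rightarrow> nat \<Rightarrow> nat \<Rightarrow> complex" where
  "VA a b = (\<lambda>i j. if i < 6 \<and> j < 3 then ([1, -1, a, -a, b, -b] ! i) ^ j else 0)"

definition det3 :: "(nat \<Rightarrow> nat \<Rightarrow> complex) \<Rightarrow> nat \<Rightarrow> nat \<Rightarrow> nat \<Rightarrow> complex" where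
  "det3 \<beta> i j k = \<beta> i 0 * (\<beta> j 1 * \<beta> k 2 - \<beta> j 2 * \<beta> k 1)
     - \<beta> i 1 * (\<beta> j 0 * \<beta> k 2 - \<beta> j 2 * \<beta> k 0)
     + \<beta> i 2 * (\<beta> j 0 * \<beta> k 1 - \<beta> j 1 * \<beta> k 0)"

definition fB :: "(nat \<Rightarrow> nat \<Rightarrow> complex) \<Rightarrow> complex" where
  "fB \<beta> = det3 \<beta> 3 4 5 * det3 \<beta> 0 1 2 - det3 \<beta> 2 4 5 * det3 \<beta> 0 1 3"

lemma lf3: "lin_form 3 v w = v 0 * w 0 + v 1 * w 1 + v 2 * w 2"
  by (simp add: lin_form_def eval_nat_numeral)

lemma mem_D_L: "t \<in> D_L k \<beta> L \<longleftrightarrow> (\<exists>w. \<forall>p\<in>L. lin_form k (\<beta> p) w = t p)"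
  unfolding D_L_def transl_hyp_def by blast

lemma key_identity:
  "det3 \<beta> 3 4 5 * lin_form 3 (\<beta> 2) w - det3 \<beta> 2 4 5 * lin_form 3 (\<beta> 3) w
   + det3 \<beta> 2 3 5 * lin_form 3 (\<beta> 4) w - det3 \<beta> 2 3 4 * lin_form 3 (\<beta> 5) w = 0"
  unfolding lf3 det3_def by algebra

lemma fB_zero:
  assumes "lattice_data 6 3 \<beta> {{0,1,2,3},{0,1,4,5}} {2,3,4,5}"
  shows "fB \<beta> = 0"
proof -
  define u :: "nat \<Rightarrow> complex" where "u = (\<lambda>j. if j = 0 then \<beta> 0 1 * \<beta> 1 2 - \<beta> 0 2 * \<beta> 1 1
     else if j = 1 then \<beta> 0 2 * \<beta> 1 0 - \<beta> 0 0 * \<beta> 1 2 else \<beta> 0 0 * \<beta> 1 1 - \<beta> 0 1 * \<beta> 1 0)"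
  define t :: "nat \<Rightarrow> complex" where "t = (\<lambda>p. if p = 2 \<or> p = 3 then lin_form 3 (\<beta> p) u else 0)"
  have u0: "lin_form 3 (\<beta> 0) u = 0" "lin_form 3 (\<beta> 1) u = 0"
    unfolding lf3 u_def by (simp_all add: algebra_simps)
  have "t \<in> D_L 3 \<beta> {0,1,2,3}"
    unfolding mem_D_L
    apply (rule exI[of _ u])
    using u0 by (simp add: t_def)
  moreover have "t \<in> D_L 3 \<beta> {0,1,4,5}"
    unfolding mem_D_L
    apply (rule exI[of _ "\<lambda>_. 0"])
    by (simp add: t_def lin_form_def)
  ultimately have "t \<in> D_L 3 \<beta> {2,3,4,5}"
    using assms unfolding lattice_data_def by blast
  then obtain w where w: "lin_form 3 (\<beta> 2) w = t 2" "lin_form 3 (\<beta> 3) w = t 3"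
      "lin_form 3 (\<beta> 4) w = t 4" "lin_form 3 (\<beta> 5) w = t 5"
    unfolding mem_D_L by auto
  have "det3 \<beta> 3 4 5 * lin_form 3 (\<beta> 2) u - det3 \<beta> 2 4 5 * lin_form 3 (\<beta> 3) u = 0"
    using key_identity[of \<beta> w] w by (simp add: t_def)
  moreover have "lin_form 3 (\<beta> 2) u = det3 \<beta> 0 1 2" "lin_form 3 (\<beta> 3) u = det3 \<beta> 0 1 3"
    unfolding lf3 u_def det3_def by (simp_all add: algebra_simps)
  ultimately show ?thesis unfolding fB_def by simp
qed

lemma polyfun_diff: "polyfun n k f \<Longrightarrow> polyfun n k g \<Longrightarrow> polyfun n k (\<lambda>x. f x - g x)"
proof -
  assume "polyfun n k f" "polyfun n k g"
  then have "polyfun n k (\<lambda>x. f x + (\<lambda>_. -1) x * g x)"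
    by (intro polyfun.add polyfun.mult polyfun.const)
  then show ?thesis by simp
qed

lemma polyfun_det3: "i < 6 \<Longrightarrow> j < 6 \<Longrightarrow> k < 6 \<Longrightarrow> polyfun 6 3 (\<lambda>\<beta>. det3 \<beta> i j k)"
  unfolding det3_def
  by (intro polyfun_diff polyfun.add polyfun.mult polyfun.coord) auto

lemma polyfun_fB: "polyfun 6 3 fB"
  unfolding fB_def[abs_def]
  by (intro polyfun_diff polyfun.mult polyfun_det3) auto

definition B0 :: "nat \<Rightarrow> nat \<Rightarrow> complex" where
  "B0 i j = (if i < 6 \<and> j < 3 \<and> j = i mod 3 then 1 else 0)"

lemma B0: "B0 \<in> arr_space 6 3" "fB B0 \<noteq> 0"
  by (auto simp: arr_space_def B0_def fB_def det3_def)

lemma lfVA: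
  "lin_form 3 (VA a b 0) w = w 0 + w 1 + w 2"
  "lin_form 3 (VA a b 1) w = w 0 - w 1 + w 2"
  "lin_form 3 (VA a b (Suc 0)) w = w 0 - w 1 + w 2"
  "lin_form 3 (VA a b 2) w = w 0 + a * w 1 + a^2 * w 2"
  "lin_form 3 (VA a b 3) w = w 0 - a * w 1 + a^2 * w 2"
  "lin_form 3 (VA a b 4) w = w 0 + b * w 1 + b^2 * w 2"
  "lin_form 3 (VA a b 5) w = w 0 - b * w 1 + b^2 * w 2"
  by (simp_all add: lf3 VA_def power2_eq_square)

lemma VA_lattice:
  assumes ab: "a^2 \<noteq> b^2"
  shows "lattice_data 6 3 (VA a b) {{0,1,2,3},{0,1,4,5}} {2,3,4,5}"
proof -
  have S: "{{0,1,2,3},{0,1,4,5}} \<subseteq> Ls 6 3" and L: "{2,3,4,5} \<in> Ls 6 3"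
    by (auto simp: Ls_def)
  have "t \<in> D_L 3 (VA a b) {2,3,4,5}"
    if t1: "t \<in> D_L 3 (VA a b) {0,1,2,3}" and t2: "t \<in> D_L 3 (VA a b) {0,1,4,5}" for t
  proof -
    obtain w1 where w1: "\<forall>p\<in>{0,1,2,3}. lin_form 3 (VA a b p) w1 = t p"
      using t1 unfolding mem_D_L by blast
    obtain w2 where w2: "\<forall>p\<in>{0,1,4,5}. lin_form 3 (VA a b p) w2 = t p"
      using t2 unfolding mem_D_L by blast
    have e: "w1 0 + w1 1 + w1 2 = w2 0 + w2 1 + w2 2" "w1 0 - w1 1 + w1 2 = w2 0 - w2 1 + w2 2"
      "w1 0 + a * w1 1 + a^2 * w1 2 = t 2" "w1 0 - a * w1 1 + a^2 * w1 2 = t 3"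
      "w2 0 + b * w2 1 + b^2 * w2 2 = t 4" "w2 0 - b * w2 1 + b^2 * w2 2 = t 5"
      using w1 w2 by (auto simp: lfVA)
    have "2 * w1 1 = 2 * w2 1" using e(1,2) by algebra
    hence d1: "w1 1 = w2 1" by simp
    have d0: "w1 0 - w2 0 = - (w1 2 - w2 2)" using e(1) d1 by (simp add: algebra_simps)
    define c where "c = (w1 2 - w2 2) * (a^2 - 1) / (a^2 - b^2)"
    have ab': "a^2 - b^2 \<noteq> 0" using ab by simp
    have cc: "c * (a^2 - b^2) = (w1 2 - w2 2) * (a^2 - 1)" unfolding c_def using ab' by simp
    define w :: "nat \<Rightarrow> complex" where "w = (\<lambda>j. if j = 0 then w2 0 - c * b^2 else if j = 1 then w2 1 else w2 2 + c)"
    have "\<forall>p\<in>{2,3,4,5}. lin_form 3 (VA a b p) w = t p"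
    proof -
      have "lin_form 3 (VA a b 2) w = t 2"
        unfolding lfVA w_def using cc d0 d1 e(3) by simp algebra
      moreover have "lin_form 3 (VA a b 3) w = t 3"
        unfolding lfVA w_def using cc d0 d1 e(4) by simp algebra
      moreover have "lin_form 3 (VA a b 4) w = t 4"
        unfolding lfVA w_def using e(5)[symmetric] by (simp add: algebra_simps)
      moreover have "lin_form 3 (VA a b 5) w = t 5"
        unfolding lfVA w_def using e(6)[symmetric] by (simp add: algebra_simps)
      ultimately show ?thesis by simp
    qed
    then show ?thesis unfolding mem_D_L by blast
  qed
  then show ?thesis using S L unfolding lattice_data_def by blast
qed

lemma VA_cg:
  assumes dist: "distinct [1, -1, a, -a, b, -b :: complex]"
  shows "central_generic 6 3 (VA a b)"
  unfolding central_generic_def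
proof (intro conjI allI impI ballI)
  show "VA a b \<in> arr_space 6 3" by (auto simp: arr_space_def VA_def)
  show "(3::nat) < 6" by simp
next
  fix I c i0
  assume I: "I \<subseteq> {..<6} \<and> card I \<le> 3"
    and h: "\<forall>j<3. (\<Sum>i\<in>I. c i * VA a b i j) = 0" and i0: "i0 \<in> I"
  define s where "s i = [1, -1, a, -a, b, -b :: complex] ! i" for i
  have sinj: "s i = s j \<Longrightarrow> i < 6 \<Longrightarrow> j < 6 \<Longrightarrow> i = j" for i j
    using dist unfolding s_def by (simp add: nth_eq_iff_index_eq)
  have fin: "finite I" using I finite_subset by blast
  have VAs: "i \<in> I \<Longrightarrow> j < 3 \<Longrightarrow> VA a b i j = s i ^ j" for i j
    using I by (auto simp: VA_def s_def)
  have hj: "(\<Sum>i\<in>I. c i * s i ^ j) = 0" if "j < 3" for j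
  proof -
    have "(\<Sum>i\<in>I. c i * s i ^ j) = (\<Sum>i\<in>I. c i * VA a b i j)"
      by (rule sum.cong) (use VAs that in auto)
    then show ?thesis using h that by simp
  qed
  have h0: "(\<Sum>i\<in>I. c i) = 0" using hj[of 0] by simp
  have h1: "(\<Sum>i\<in>I. c i * s i) = 0" using hj[of 1] by simp
  have h2: "(\<Sum>i\<in>I. c i * s i^2) = 0" using hj[of 2] by simp
  have "card (I - {i0}) = card I - 1" using i0 fin by (simp add: card_Diff_singleton)
  hence "card (I - {i0}) \<le> 2" using I by linarith
  moreover have "card ({..<6::nat} - {i0}) = 5" using I i0 by (auto simp: card_Diff_singleton)
  ultimately obtain J where J: "I - {i0} \<subseteq> J" "J \<subseteq> {..<6::nat} - {i0}" "card J = 2"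
    using exists_subset_between[of "I - {i0}" 2 "{..<6::nat} - {i0}"] I by auto
  then obtain j1 j2 where j12: "J = {j1, j2}" by (meson card_2_iff)
  define P where "P x = (x - s j1) * (x - s j2)" for x
  have "(\<Sum>i\<in>I. c i * P (s i)) = (\<Sum>i\<in>I. c i * s i^2) - (s j1 + s j2) * (\<Sum>i\<in>I. c i * s i)
        + s j1 * s j2 * (\<Sum>i\<in>I. c i)"
    by (simp add: P_def sum_distrib_left sum_subtractf sum.distrib algebra_simps power2_eq_square)
  also have "\<dots> = 0" using h0 h1 h2 by simp
  finally have sum0: "(\<Sum>i\<in>I. c i * P (s i)) = 0" .
  have "(\<Sum>i\<in>I. c i * P (s i)) = c i0 * P (s i0) + (\<Sum>i\<in>I - {i0}. c i * P (s i))"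
    using fin i0 by (simp add: sum.remove)
  also have "(\<Sum>i\<in>I - {i0}. c i * P (s i)) = 0"
    by (rule sum.neutral) (use J j12 in \<open>auto simp: P_def\<close>)
  finally have "c i0 * P (s i0) = 0" using sum0 by simp
  moreover have "P (s i0) \<noteq> 0"
  proof
    assume "P (s i0) = 0"
    then have "s i0 = s j1 \<or> s i0 = s j2" by (simp add: P_def)
    moreover have "j1 < 6" "j2 < 6" "j1 \<noteq> i0" "j2 \<noteq> i0" using J j12 by auto
    moreover have "i0 < 6" using I i0 by auto
    ultimately show False using sinj by blast
  qed
  ultimately show "c i0 = 0" by simp
qed

theorem mainTheorem4:
  fixes a b :: complex
  assumes "distinct [1, -1, a, -a, b, -b]"
  defines "\<alpha> \<equiv> (\<lambda>i j. if i < 6 \<and> j < 3 then ([1, -1, a, -a, b, -b] ! i) ^ j else 0)"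
  shows "central_generic 6 3 \<alpha> \<and> \<not> very_generic 6 3 \<alpha>"
proof -
  have aVA: "\<alpha> = VA a b" unfolding \<alpha>_def VA_def by simp
  have cg: "central_generic 6 3 \<alpha>" using VA_cg[OF assms(1)] aVA by simp
  have ab: "a^2 \<noteq> b^2"
  proof
    assume "a^2 = b^2"
    then have "(a - b) * (a + b) = 0" by (simp add: algebra_simps power2_eq_square)
    then have "a = b \<or> a = -b" by (auto simp: add_eq_0_iff2)
    then show False using assms(1) by auto
  qed
  have lat: "lattice_data 6 3 \<alpha> {{0,1,2,3},{0,1,4,5}} {2,3,4,5}"
    using VA_lattice[OF ab] aVA by simp
  have "\<not> very_generic 6 3 \<alpha>"
  proof
    assume "very_generic 6 3 \<alpha>"
    then obtain Z where Z: "zariski_open 6 3 Z" "zariski_dense 6 3 Z" "\<alpha> \<in> Z"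
      "\<forall>\<beta>\<in>Z. lattice_data 6 3 \<beta> = lattice_data 6 3 \<alpha>"
      unfolding very_generic_def by blast
    define C where "C = {\<beta> \<in> arr_space 6 3. \<forall>f\<in>{fB}. f \<beta> = 0}"
    have "zariski_closed 6 3 C" unfolding zariski_closed_def C_def
      using polyfun_fB by blast
    moreover have "Z \<subseteq> C"
    proof
      fix \<beta> assume "\<beta> \<in> Z"
      then have "lattice_data 6 3 \<beta> {{0,1,2,3},{0,1,4,5}} {2,3,4,5}" using Z(4) lat by simp
      then have "fB \<beta> = 0" by (rule fB_zero)
      moreover have "\<beta> \<in> arr_space 6 3" using \<open>\<beta> \<in> Z\<close> Z(1) unfolding zariski_open_def by blast
      ultimately show "\<beta> \<in> C" unfolding C_def by simp
    qed
    ultimately have "C = arr_space 6 3" using Z(2) unfolding zariski_dense_def by blast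
    then show False using B0 unfolding C_def by blast
  qed
  with cg show ?thesis by simp
qed

end
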